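(* Consider the factor (Tanner) graph of an LDPC code decoded by the binary message-passing decoder described in the context. Let $C$ be a cycle in the factor graph all of whose variable nodes have degree two or three. Assume that the channel messages associated with the variable nodes of $C$ are in error, and that all other incoming messages at the check nodes of $C$ (i.e. those not arriving along edges of $C$) are correct. Then the variable nodes forming the cycle cannot be corrected by the binary message-passing decoder: in every iteration the messages they send along the edges of $C$ remain in error.
   Context: Transmitted bits are represented in $\{+1,-1\}$ and a message is "in error" if its sign differs from the transmitted bit of the corresponding variable node. All messages between variable and check nodes are binary ($\pm1$). In the first iteration each variable node sends its channel hard decision. A check node sends on each edge the product of the messages received on its other edges. A variable node of degree $d_v$ with channel L-value $L_{ch}=y D_{ch}$ ($y\in\{\pm1\}$ the channel hard decision, $D_{ch}>0$ its reliability) and incoming check messages $a_i\in\{\pm1\}$, all converted to L-values $a_iD_{av}$ with a common reliability $D_{av}>0$ in a given iteration, sends on edge $j$ the sign of $L_{ev,j}=L_{ch}+\sum_{i\ne j}a_iD_{av}$. *)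

theory Defs
  imports Complex_Main
begin

text \<open>Tanner (factor) graph: a set of edges between variable nodes of type 'v and
check nodes of type 'c. Messages are binary, represented as integers in {1,-1}.\<close>

definition var_nbrs :: "('v \<times> 'c) set \<Rightarrow> 'v \<Rightarrow> 'c set" where
  "var_nbrs E v = {c. (v, c) \<in> E}"

definition chk_nbrs :: "('v \<times> 'c) set \<Rightarrow> 'c \<Rightarrow> 'v set" where
  "chk_nbrs E c = {v. (v, c) \<in> E}"

text \<open>Hard sign of an L-value (the tie convention at 0 is irrelevant for the theorem).\<close>
definition hard_sign :: "real \<Rightarrow> int" where
  "hard_sign r = (if r \<ge> 0 then 1 else -1)"

definition cv_msg :: "('v \<times> 'c) set \<Rightarrow> ('v \<Rightarrow> 'c \<Rightarrow> int) \<Rightarrow> 'c \<Rightarrow> 'v \<Rightarrow> int" where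
  "cv_msg E m c v = (\<Prod>v'\<in>chk_nbrs E c - {v}. m v' c)"

text \<open>Variable-to-check messages of iteration t (t = 0 is the first iteration).
  y: channel hard decisions, Dch: channel reliability, Dav t: reliability used to
  convert the check messages of iteration t into L-values.\<close>
primrec vc_msg :: "('v \<times> 'c) set \<Rightarrow> ('v \<Rightarrow> int) \<Rightarrow> real \<Rightarrow> (nat \<Rightarrow> real)
    \<Rightarrow> nat \<Rightarrow> 'v \<Rightarrow> 'c \<Rightarrow> int" where
  "vc_msg E y Dch Dav 0 = (\<lambda>v c. y v)"
| "vc_msg E y Dch Dav (Suc t) = (\<lambda>v c. hard_sign (real_of_int (y v) * Dch
      + (\<Sum>c'\<in>var_nbrs E v - {c}.
            real_of_int (cv_msg E (vc_msg E y Dch Dav t) c' v) * Dav t)))"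

text \<open>A cycle v_0 c_0 v_1 c_1 ... v_{k-1} c_{k-1} v_0 in the bipartite graph.\<close>
definition is_cycle :: "('v \<times> 'c) set \<Rightarrow> 'v list \<Rightarrow> 'c list \<Rightarrow> bool" where
  "is_cycle E vs cs \<longleftrightarrow> length vs = length cs \<and> length vs \<ge> 2 \<and> distinct vs \<and> distinct cs \<and>
     (\<forall>i < length vs. (vs ! i, cs ! i) \<in> E \<and> (vs ! (Suc i mod length vs), cs ! i) \<in> E)"

definition cycle_edges :: "'v list \<Rightarrow> 'c list \<Rightarrow> ('v \<times> 'c) set" where
  "cycle_edges vs cs = {(vs ! i, cs ! i) | i. i < length vs}
     \<union> {(vs ! (Suc i mod length vs), cs ! i) | i. i < length vs}"

definition is_codeword :: "('v \<times> 'c) set \<Rightarrow> ('v \<Rightarrow> int) \<Rightarrow> bool" where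
  "is_codeword E x \<longleftrightarrow> (\<forall>v. x v \<in> {1, -1}) \<and> (\<forall>c. (\<Prod>v\<in>chk_nbrs E c. x v) = 1)"

end

theory Submission
  imports Defs
begin

lemma prod_pm: "\<forall>a\<in>A. f a \<in> {1,-1::int} \<Longrightarrow> prod f A \<in> {1,-1}"
proof (cases "finite A")
  case True
  then show "\<forall>a\<in>A. f a \<in> {1,-1::int} \<Longrightarrow> prod f A \<in> {1,-1}"
    by (induction A rule: finite_induct) auto
qed simp

lemma vc_pm: "\<forall>v. y v \<in> {1,-1} \<Longrightarrow> vc_msg E y Dch Dav t v c \<in> {1,-1}"
  by (induction t arbitrary: v c) (auto simp: hard_sign_def)

lemma cv_pm: "\<forall>v c. m v c \<in> {1,-1} \<Longrightarrow> cv_msg E m c v \<in> {1,-1}"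
  unfolding cv_msg_def by (rule prod_pm) auto

lemma suc_mod_ne: assumes "i < (n::nat)" "2 \<le> n" shows "Suc i mod n \<noteq> i"
proof (cases "Suc i < n")
  case True then show ?thesis by simp
next
  case False then have "Suc i = n" using assms(1) by simp
  then show ?thesis using assms(2) by auto
qed

lemma cyc_other:
  assumes "is_cycle E vs cs" "(v,c) \<in> cycle_edges vs cs"
  shows "\<exists>j<length vs. cs!j \<noteq> c \<and> (v = vs!j \<or> v = vs!(Suc j mod length vs))"
proof -
  let ?n = "length vs"
  have n2: "?n \<ge> 2" and dc: "distinct cs" and ln: "length cs = ?n"
    using assms(1) unfolding is_cycle_def by auto
  from assms(2) obtain i where i: "i < ?n" and
    cases: "(v = vs!i \<and> c = cs!i) \<or> (v = vs!(Suc i mod ?n) \<and> c = cs!i)"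
    unfolding cycle_edges_def by auto
  from cases show ?thesis
  proof
    assume A: "v = vs!i \<and> c = cs!i"
    define j where "j = (i + ?n - 1) mod ?n"
    have jn: "j < ?n" using n2 unfolding j_def by (intro mod_less_divisor) linarith
    have "Suc j mod ?n = Suc (i + ?n - 1) mod ?n" unfolding j_def by (simp add: mod_Suc_eq)
    also have "Suc (i + ?n - 1) = i + ?n" using n2 by simp
    also have "(i + ?n) mod ?n = i" using i by simp
    finally have sj: "Suc j mod ?n = i" .
    have "j \<noteq> i"
    proof
      assume "j = i" then have "Suc i mod ?n = i" using sj by simp
      then show False using i n2
        using suc_mod_ne by blast
    qed
    then have "cs!j \<noteq> cs!i" using dc jn i ln by (simp add: nth_eq_iff_index_eq)
    then show ?thesis using A sj jn by auto
  next
    assume B: "v = vs!(Suc i mod ?n) \<and> c = cs!i"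
    define j where "j = Suc i mod ?n"
    have jn: "j < ?n" using n2 unfolding j_def by (intro mod_less_divisor) linarith
    have "j \<noteq> i"
    proof
      assume "j = i" then have "Suc i mod ?n = i" unfolding j_def by simp
      then show False using i n2
        using suc_mod_ne by blast
    qed
    then have "cs!j \<noteq> cs!i" using dc jn i ln by (simp add: nth_eq_iff_index_eq)
    then show ?thesis using B jn unfolding j_def by auto
  qed
qed

lemma cyc_checks:
  assumes "is_cycle E vs cs" "j < length vs" "(w, cs!j) \<in> cycle_edges vs cs"
  shows "w = vs!j \<or> w = vs!(Suc j mod length vs)"
proof -
  have dc: "distinct cs" and ln: "length cs = length vs"
    using assms(1) unfolding is_cycle_def by auto
  from assms(3) obtain i where i: "i < length vs" and
    c: "(w = vs!i \<and> cs!j = cs!i) \<or> (w = vs!(Suc i mod length vs) \<and> cs!j = cs!i)"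
    unfolding cycle_edges_def by auto
  have "cs!j = cs!i" using c by auto
  then have "i = j" using dc i assms(2) ln by (simp add: nth_eq_iff_index_eq)
  then show ?thesis using c by auto
qed

lemma cyc_dn:
  assumes "is_cycle E vs cs" "j < length vs"
  shows "vs!j \<noteq> vs!(Suc j mod length vs)"
proof -
  have n2: "length vs \<ge> 2" and dv: "distinct vs"
    using assms(1) unfolding is_cycle_def by auto
  have "Suc j mod length vs \<noteq> j"
    using assms(2) n2 using suc_mod_ne by blast
  moreover have "Suc j mod length vs < length vs" using n2 by (intro mod_less_divisor) linarith
  ultimately show ?thesis using dv assms(2) by (simp add: nth_eq_iff_index_eq)
qed

lemma cyc_E:
  assumes "is_cycle E vs cs" "j < length vs"
  shows "(vs!j, cs!j) \<in> E" "(vs!(Suc j mod length vs), cs!j) \<in> E"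
  using assms unfolding is_cycle_def by auto

lemma cyc_in_E:
  assumes "is_cycle E vs cs" "(v,c) \<in> cycle_edges vs cs"
  shows "(v,c) \<in> E" "v \<in> set vs"
proof -
  have n2: "length vs \<ge> 2" using assms(1) unfolding is_cycle_def by auto
  from assms(2) obtain i where i: "i < length vs" and
    c: "(v = vs!i \<and> c = cs!i) \<or> (v = vs!(Suc i mod length vs) \<and> c = cs!i)"
    unfolding cycle_edges_def by auto
  have m: "Suc i mod length vs < length vs" using n2 by (intro mod_less_divisor) linarith
  show "(v,c) \<in> E" using c cyc_E[OF assms(1) i] by auto
  show "v \<in> set vs" using c i m by (auto intro: nth_mem)
qed

lemma fin_chk: "finite E \<Longrightarrow> finite (chk_nbrs E c)"
  unfolding chk_nbrs_def
  by (rule finite_subset[of _ "fst ` E"]) force+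

lemma fin_var: "finite E \<Longrightarrow> finite (var_nbrs E v)"
  unfolding var_nbrs_def
  by (rule finite_subset[of _ "snd ` E"]) force+

theorem theorem3:
  fixes E :: "('v \<times> 'c) set" and x y :: "'v \<Rightarrow> int"
    and Dch :: real and Dav :: "nat \<Rightarrow> real"
    and vs :: "'v list" and cs :: "'c list"
  assumes "finite E"
    and "is_codeword E x"
    and "\<forall>v. y v \<in> {1, -1}"
    and "Dch > 0" and "\<forall>t. Dav t > 0"
    and "is_cycle E vs cs"
    and "\<forall>v \<in> set vs. card (var_nbrs E v) \<in> {2, 3}"
    and "\<forall>v \<in> set vs. y v = - x v"
    and "\<forall>t. \<forall>c \<in> set cs. \<forall>v \<in> chk_nbrs E c. (v, c) \<notin> cycle_edges vs cs
            \<longrightarrow> vc_msg E y Dch Dav t v c = x v"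
  shows "\<forall>t. \<forall>(v, c) \<in> cycle_edges vs cs. vc_msg E y Dch Dav t v c = - x v"
proof
  fix t
  let ?CE = "cycle_edges vs cs"
  let ?n = "length vs"
  have xpm: "\<And>v. x v \<in> {1,-1}" and xprod: "\<And>c. (\<Prod>v\<in>chk_nbrs E c. x v) = 1"
    using assms(2) unfolding is_codeword_def by auto
  show "\<forall>(v, c) \<in> ?CE. vc_msg E y Dch Dav t v c = - x v"
  proof (induction t)
    case 0
    then show ?case using assms(8) cyc_in_E[OF assms(6)] by auto
  next
    case (Suc t)
    let ?m = "vc_msg E y Dch Dav t"
    have IH: "\<And>v c. (v,c) \<in> ?CE \<Longrightarrow> ?m v c = - x v" using Suc by auto
    show ?case
    proof (clarify)
      fix v c assume vc: "(v,c) \<in> ?CE"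
      have vset: "v \<in> set vs" using cyc_in_E[OF assms(6) vc] by simp
      obtain j where jn: "j < ?n" and cj: "cs!j \<noteq> c"
        and vj: "v = vs!j \<or> v = vs!(Suc j mod ?n)"
        using cyc_other[OF assms(6) vc] by blast
      define c' where "c' = cs!j"
      define v' where "v' = (if v = vs!j then vs!(Suc j mod ?n) else vs!j)"
      have dn: "vs!j \<noteq> vs!(Suc j mod ?n)" using cyc_dn[OF assms(6) jn] .
      have vv': "v' \<noteq> v" using dn vj unfolding v'_def by auto
      have c'set: "c' \<in> set cs" using jn assms(6) unfolding c'_def is_cycle_def by auto
      have vc'E: "(v,c') \<in> E" and v'c'E: "(v',c') \<in> E"
        using cyc_E[OF assms(6) jn] vj unfolding c'_def v'_def by auto
      have v'CE: "(v',c') \<in> ?CE"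
        using jn unfolding c'_def v'_def cycle_edges_def by auto
      have others: "\<And>w. (w,c') \<in> ?CE \<Longrightarrow> w = v \<or> w = v'"
        proof -
        fix w assume "(w,c') \<in> ?CE"
        then have "w = vs!j \<or> w = vs!(Suc j mod ?n)" using cyc_checks[OF assms(6) jn] unfolding c'_def by blast
        then show "w = v \<or> w = v'" using vj unfolding v'_def by auto
      qed
      define A where "A = chk_nbrs E c' - {v}"
      have finA: "finite A" using fin_chk[OF assms(1)] unfolding A_def by simp
      have v'A: "v' \<in> A" using v'c'E vv' unfolding A_def chk_nbrs_def by auto
      have mA: "\<And>w. w \<in> A \<Longrightarrow> ?m w c' = (if w = v' then - x w else x w)"
      proof -
        fix w assume wA: "w \<in> A"
        show "?m w c' = (if w = v' then - x w else x w)"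
        proof (cases "w = v'")
          case True then show ?thesis using IH v'CE by simp
        next
          case False
          then have "(w,c') \<notin> ?CE" using others wA unfolding A_def by auto
          then show ?thesis using assms(9) c'set wA False unfolding A_def by auto
        qed
      qed
      have "cv_msg E ?m c' v = (\<Prod>w\<in>A. ?m w c')" unfolding cv_msg_def A_def by simp
      also have "\<dots> = (\<Prod>w\<in>A. (if w = v' then -1 else 1) * x w)"
        using mA by (intro prod.cong) auto
      also have "\<dots> = (\<Prod>w\<in>A. (if w = v' then -1 else 1)) * (\<Prod>w\<in>A. x w)"
        by (rule prod.distrib)
      also have "(\<Prod>w\<in>A. (if w = v' then -1 else (1::int))) = -1"
        using finA v'A by (simp add: prod.If_cases Int_absorb1)
      also have "(\<Prod>w\<in>A. x w) = x v"
      proof -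
        have vin: "v \<in> chk_nbrs E c'" using vc'E unfolding chk_nbrs_def by simp
        have "1 = (\<Prod>w\<in>chk_nbrs E c'. x w)" using xprod by simp
        also have "\<dots> = x v * (\<Prod>w\<in>A. x w)"
          unfolding A_def using prod.remove[OF fin_chk[OF assms(1)] vin] by simp
        finally have "x v * (\<Prod>w\<in>A. x w) = 1" by simp
        then show ?thesis using xpm[of v] by auto
      qed
      finally have cvc': "cv_msg E ?m c' v = - x v" by simp
      define f where "f = (\<lambda>c''. real_of_int (cv_msg E ?m c'' v) * Dav t)"
      define R where "R = var_nbrs E v - {c} - {c'}"
      have finV: "finite (var_nbrs E v)" using fin_var[OF assms(1)] .
      have c'in: "c' \<in> var_nbrs E v - {c}" using vc'E cj unfolding c'_def var_nbrs_def by auto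
      have cin: "c \<in> var_nbrs E v" using cyc_in_E[OF assms(6) vc] unfolding var_nbrs_def by simp
      have sumeq: "(\<Sum>c''\<in>var_nbrs E v - {c}. f c'') = f c' + sum f R"
        unfolding R_def using sum.remove[OF _ c'in, of f] finV by simp
      have cardR: "card R \<le> 1"
      proof -
        have "card (var_nbrs E v - {c}) = card (var_nbrs E v) - 1"
          using cin finV by simp
        then have "card R = card (var_nbrs E v) - 2"
          unfolding R_def using c'in finV by simp
        then show ?thesis using assms(7) vset by auto
      qed
      have mpm: "\<forall>a b. ?m a b \<in> {1,-1}" by (intro allI vc_pm[OF assms(3)])
      have absf: "\<And>c''. \<bar>f c''\<bar> = Dav t"
      proof -
        fix c'' have "cv_msg E ?m c'' v \<in> {1,-1}" using cv_pm[OF mpm] .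
        then have a1: "\<bar>real_of_int (cv_msg E ?m c'' v)\<bar> = 1" by auto
        have "Dav t > 0" using assms(5) by simp
        then show "\<bar>f c''\<bar> = Dav t" unfolding f_def abs_mult a1 by simp
      qed
      have "\<bar>sum f R\<bar> \<le> (\<Sum>c''\<in>R. \<bar>f c''\<bar>)" by (rule sum_abs)
      also have "\<dots> = real (card R) * Dav t" using absf by simp
      also have "\<dots> \<le> 1 * Dav t"
      proof (rule mult_right_mono)
        show "real (card R) \<le> 1" using cardR by simp
        show "0 \<le> Dav t" using assms(5) less_imp_le by blast
      qed
      also have "\<dots> = Dav t" by simp
      finally have Rb: "\<bar>sum f R\<bar> \<le> Dav t" .
      have yv: "y v = - x v" using assms(8) vset by simp
      have "vc_msg E y Dch Dav (Suc t) v c =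
          hard_sign (real_of_int (y v) * Dch + (\<Sum>c''\<in>var_nbrs E v - {c}. f c''))"
        unfolding f_def by simp
      also have "\<dots> = hard_sign (real_of_int (- x v) * Dch + real_of_int (- x v) * Dav t + sum f R)"
      proof -
        have fc': "f c' = real_of_int (- x v) * Dav t" unfolding f_def cvc' by simp
        have "real_of_int (y v) * Dch + (\<Sum>c''\<in>var_nbrs E v - {c}. f c'') =
            real_of_int (- x v) * Dch + real_of_int (- x v) * Dav t + sum f R"
          unfolding sumeq fc' yv by simp
        then show ?thesis by (rule arg_cong)
      qed
      also have "\<dots> = - x v"
      proof -
        have D: "Dav t > 0" using assms(5) by blast
        have "x v = 1 \<or> x v = -1" using xpm[of v] by simp
        then show ?thesis
        proof
          assume h: "x v = 1"
          have "real_of_int (- x v) * Dch + real_of_int (- x v) * Dav t + sum f R < 0"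
            using h Rb assms(4) D by (simp add: abs_le_iff)
          then show ?thesis using h unfolding hard_sign_def by simp
        next
          assume h: "x v = -1"
          have "real_of_int (- x v) * Dch + real_of_int (- x v) * Dav t + sum f R \<ge> 0"
            using h Rb assms(4) D by (simp add: abs_le_iff)
          then show ?thesis using h unfolding hard_sign_def by simp
        qed
      qed
      finally show "vc_msg E y Dch Dav (Suc t) v c = - x v" .
    qed
  qed
qed

end
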